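(* (a) A sphere with $6$ punctures has an ideal triangulation satisfying (T4). (b) A sphere with $5$ punctures has an ideal triangulation satisfying (T3$\tfrac12$), but no ideal triangulation satisfying (T4). (c) A sphere with $4$ punctures has an ideal triangulation satisfying (T3), but no ideal triangulation satisfying (T3$\tfrac12$).
   Context: Arcs incident to a puncture are counted with multiplicity (an arc with both endpoints at the puncture counts twice). (T3): at each puncture at least three arcs of $T$ are incident. (T3$\tfrac12$): $T$ has (T3) and every arc of $T$ has an endpoint with at least four incident arcs. (T4): at each puncture at least four arcs of $T$ are incident. *)

theory Defs
  imports "HOL-Combinatorics.Permutations"
begin

(* Ideal triangulations of a punctured oriented sphere, encoded as
   combinatorial maps (darts = half-arcs = ends of arcs at punctures).
   alpha : involution pairing the two ends of each arc,
   sigma : rotation of arc-ends around each puncture,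
   sigma o alpha : walks around the (ideal) triangles. *)

definition orb :: "('a \<Rightarrow> 'a) \<Rightarrow> 'a \<Rightarrow> 'a set" where
  "orb f d = {(f ^^ k) d | k. True}"

definition punctures :: "'a set \<Rightarrow> ('a \<Rightarrow> 'a) \<Rightarrow> 'a set set" where
  "punctures D sigma = orb sigma ` D"

definition arcs :: "'a set \<Rightarrow> ('a \<Rightarrow> 'a) \<Rightarrow> 'a set set" where
  "arcs D alpha = orb alpha ` D"

definition triangles :: "'a set \<Rightarrow> ('a \<Rightarrow> 'a) \<Rightarrow> ('a \<Rightarrow> 'a) \<Rightarrow> 'a set set" where
  "triangles D alpha sigma = orb (sigma \<circ> alpha) ` D"

definition ideal_triangulation_sphere :: "'a set \<Rightarrow> ('a \<Rightarrow> 'a) \<Rightarrow> ('a \<Rightarrow> 'a) \<Rightarrow> bool" where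
  "ideal_triangulation_sphere D alpha sigma \<longleftrightarrow>
     finite D \<and> D \<noteq> {} \<and> alpha permutes D \<and> sigma permutes D \<and>
     (\<forall>d\<in>D. alpha (alpha d) = d \<and> alpha d \<noteq> d) \<and>
     (\<forall>d\<in>D. (sigma \<circ> alpha) d \<noteq> d \<and> ((sigma \<circ> alpha) ^^ 3) d = d) \<and>
     (\<forall>d\<in>D. \<forall>e\<in>D. (d, e) \<in> ({(x, alpha x) | x. x \<in> D} \<union> {(x, sigma x) | x. x \<in> D})\<^sup>*) \<and>
     int (card (punctures D sigma)) - int (card (arcs D alpha))
       + int (card (triangles D alpha sigma)) = 2"

(* number of arcs incident to the puncture containing arc-end d, with multiplicity *)
definition valence :: "('a \<Rightarrow> 'a) \<Rightarrow> 'a \<Rightarrow> nat" where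
  "valence sigma d = card (orb sigma d)"

definition T3 :: "'a set \<Rightarrow> ('a \<Rightarrow> 'a) \<Rightarrow> ('a \<Rightarrow> 'a) \<Rightarrow> bool" where
  "T3 D alpha sigma \<longleftrightarrow> (\<forall>d\<in>D. valence sigma d \<ge> 3)"

definition T3half :: "'a set \<Rightarrow> ('a \<Rightarrow> 'a) \<Rightarrow> ('a \<Rightarrow> 'a) \<Rightarrow> bool" where
  "T3half D alpha sigma \<longleftrightarrow> T3 D alpha sigma \<and>
     (\<forall>d\<in>D. valence sigma d \<ge> 4 \<or> valence sigma (alpha d) \<ge> 4)"

definition T4 :: "'a set \<Rightarrow> ('a \<Rightarrow> 'a) \<Rightarrow> ('a \<Rightarrow> 'a) \<Rightarrow> bool" where
  "T4 D alpha sigma \<longleftrightarrow> (\<forall>d\<in>D. valence sigma d \<ge> 4)"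

end

theory Submission
  imports Defs Complex_Main
begin


lemma funpow_mult_fix: "(f ^^ n) d = d \<Longrightarrow> (f ^^ (n*q)) d = d"
  by (induction q) (simp_all add: funpow_add)

lemma funpow_mod: assumes "(f ^^ n) d = d" "0 < n" shows "(f ^^ k) d = (f ^^ (k mod n)) d"
proof -
  have "k = k mod n + n * (k div n)" by simp
  then have "(f ^^ k) d = (f ^^ (k mod n)) ((f ^^ (n * (k div n))) d)"
    by (metis funpow_add o_apply)
  then show ?thesis using funpow_mult_fix[OF assms(1)] by simp
qed

lemma orb_period: assumes "(f ^^ n) d = d" "0 < n"
  shows "orb f d = (\<lambda>k. (f ^^ k) d) ` {..<n}"
proof
  show "orb f d \<subseteq> (\<lambda>k. (f ^^ k) d) ` {..<n}"
  proof
    fix x assume "x \<in> orb f d"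
    then obtain k where k: "x = (f ^^ k) d" unfolding orb_def by auto
    have "x = (f ^^ (k mod n)) d" using k funpow_mod[OF assms] by simp
    moreover have "k mod n \<in> {..<n}" using assms(2) by simp
    ultimately show "x \<in> (\<lambda>k. (f ^^ k) d) ` {..<n}" by blast
  qed
  show "(\<lambda>k. (f ^^ k) d) ` {..<n} \<subseteq> orb f d" unfolding orb_def by blast
qed

lemma orb_period_list: assumes "(f ^^ n) d = d" "0 < n"
  shows "orb f d = set (map (\<lambda>k. (f ^^ k) d) [0..<n])"
  using orb_period[OF assms] by (simp add: lessThan_atLeast0)

lemma self_in_orb: "d \<in> orb f d"
  unfolding orb_def by (auto intro: exI[where x=0])

lemma orb_sub: assumes "f permutes D" "d \<in> D" shows "orb f d \<subseteq> D"
  unfolding orb_def using permutes_in_funpow_image[OF assms] by auto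

lemma orb_same: assumes "f permutes D" "finite D" "d \<in> D" "e \<in> orb f d"
  shows "orb f e = orb f d"
proof -
  have perm: "permutation f" using assms(1,2) permutes_imp_permutation by blast
  obtain k where k: "e = (f ^^ k) d" using assms(4) unfolding orb_def by auto
  obtain n where n: "n > 0" "(f ^^ n) d = d" using permutation_self[OF perm] by blast
  have "orb f e \<subseteq> orb f d"
  proof
    fix x assume "x \<in> orb f e"
    then obtain j where j: "x = (f ^^ j) e" unfolding orb_def by auto
    have "x = (f ^^ (j + k)) d" unfolding j k by (simp add: funpow_add)
    then show "x \<in> orb f d" unfolding orb_def by blast
  qed
  moreover have "orb f d \<subseteq> orb f e"
  proof
    fix x assume "x \<in> orb f d"
    then obtain j where j: "x = (f ^^ j) d" unfolding orb_def by auto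
    have "(f ^^ (j + (n*k - k))) e = (f ^^ (j + n*k)) d"
    proof -
      have "k \<le> n * k" using n by simp
      then have "j + (n*k - k) + k = j + n*k" by arith
      then show ?thesis unfolding k by (metis funpow_add o_apply)
    qed
    also have "\<dots> = (f ^^ j) d" by (simp add: funpow_add funpow_mult_fix[OF n(2)])
    finally have "(f ^^ j) d = (f ^^ (j + (n*k - k))) e" by simp
    then show "x \<in> orb f e" unfolding orb_def j by blast
  qed
  ultimately show ?thesis by blast
qed

lemma orb_disj: assumes "f permutes D" "finite D" "d \<in> D" "e \<in> D" "orb f d \<noteq> orb f e"
  shows "orb f d \<inter> orb f e = {}"
proof (rule ccontr)
  assume "orb f d \<inter> orb f e \<noteq> {}"
  then obtain x where "x \<in> orb f d" "x \<in> orb f e" by blast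
  then have "orb f x = orb f d" "orb f x = orb f e"
    using orb_same[OF assms(1,2,3)] orb_same[OF assms(1,2,4)] by blast+
  then show False using assms(5) by simp
qed

lemma orb_union: assumes "f permutes D" shows "\<Union> (orb f ` D) = D"
proof
  show "\<Union> (orb f ` D) \<subseteq> D" using orb_sub[OF assms] by blast
  show "D \<subseteq> \<Union> (orb f ` D)" using self_in_orb[of _ f] by blast
qed

lemma sum_orbits: assumes "f permutes D" "finite D"
  shows "sum g D = (\<Sum>P\<in>orb f ` D. sum g P)"
proof -
  have "sum g (\<Union> (orb f ` D)) = (sum \<circ> sum) g (orb f ` D)"
  proof (rule sum.Union_disjoint)
    show "\<forall>A\<in>orb f ` D. finite A"
    proof
      fix A assume "A \<in> orb f ` D"
      then obtain d where "d \<in> D" "A = orb f d" by blast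
      then show "finite A" using orb_sub[OF assms(1)] assms(2) finite_subset by metis
    qed
    show "\<forall>A\<in>orb f ` D. \<forall>B\<in>orb f ` D. A \<noteq> B \<longrightarrow> A \<inter> B = {}"
      using orb_disj[OF assms] by blast
  qed
  then show ?thesis using orb_union[OF assms(1)] by simp
qed

lemma card_orbits_sum: assumes "f permutes D" "finite D"
  shows "card D = (\<Sum>P\<in>orb f ` D. card P)"
  using sum_orbits[OF assms, of "\<lambda>_. 1::nat"] by simp

lemma card_orbits_const: assumes "f permutes D" "finite D" "\<forall>d\<in>D. card (orb f d) = k"
  shows "card D = k * card (orb f ` D)"
proof -
  have "(\<Sum>P\<in>orb f ` D. card P) = (\<Sum>P\<in>orb f ` D. k)"
    by (rule sum.cong) (use assms(3) in auto)
  then show ?thesis using card_orbits_sum[OF assms(1,2)] by simp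
qed

lemma count_orbits: assumes "f permutes D" "finite D"
  shows "real (card (orb f ` D)) = (\<Sum>d\<in>D. 1 / real (card (orb f d)))"
proof -
  have "(\<Sum>d\<in>D. 1 / real (card (orb f d))) = (\<Sum>P\<in>orb f ` D. \<Sum>d\<in>P. 1 / real (card (orb f d)))"
    by (rule sum_orbits[OF assms])
  also have "\<dots> = (\<Sum>P\<in>orb f ` D. 1)"
  proof (rule sum.cong)
    fix P assume "P \<in> orb f ` D"
    then obtain e where e: "e \<in> D" "P = orb f e" by blast
    have fin: "finite P" using e orb_sub[OF assms(1)] finite_subset[OF _ assms(2)] by blast
    have "(\<Sum>d\<in>P. 1 / real (card (orb f d))) = (\<Sum>d\<in>P. 1 / real (card P))"
      using orb_same[OF assms(1,2) e(1)] e(2) by simp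
    also have "\<dots> = 1" using fin self_in_orb[of e f] e(2) by (subgoal_tac "card P \<noteq> 0") auto
    finally show "(\<Sum>d\<in>P. 1 / real (card (orb f d))) = 1" .
  qed simp
  finally show ?thesis by simp
qed




lemma orb_inv: assumes "alpha permutes D" "d \<in> D" "\<forall>d\<in>D. alpha (alpha d) = d \<and> alpha d \<noteq> d"
  shows "card (orb alpha d) = 2"
proof -
  have "(alpha ^^ 2) d = d" using assms(2,3) by (simp add: numeral_2_eq_2)
  then have "orb alpha d = set (map (\<lambda>k. (alpha ^^ k) d) [0..<2])" by (rule orb_period_list) simp
  also have "\<dots> = {d, alpha d}" by (simp add: numeral_2_eq_2)
  moreover have "alpha d \<noteq> d" using assms(2,3) by blast
  ultimately show ?thesis by simp
qed

lemma orb_tri: assumes "phi permutes D" "d \<in> D" "\<forall>d\<in>D. phi d \<noteq> d \<and> (phi ^^ 3) d = d"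
  shows "card (orb phi d) = 3"
proof -
  have "(phi ^^ 3) d = d" using assms(2,3) by blast
  then have "orb phi d = set (map (\<lambda>k. (phi ^^ k) d) [0..<3])" by (rule orb_period_list) simp
  also have "\<dots> = {d, phi d, phi (phi d)}" by (simp add: numeral_3_eq_3)
  finally have o: "orb phi d = {d, phi d, phi (phi d)}" .
  have pd: "phi d \<in> D" using permutes_in_image[OF assms(1)] assms(2) by simp
  have 1: "phi d \<noteq> d" using assms(2,3) by blast
  have 2: "phi (phi d) \<noteq> phi d" using pd assms(3) by blast
  have 3: "phi (phi d) \<noteq> d"
  proof
    assume "phi (phi d) = d"
    then have "(phi ^^ 3) d = phi d" by (simp add: numeral_3_eq_3)
    moreover have "(phi ^^ 3) d = d" using assms(2,3) by blast
    ultimately show False using 1 by simp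
  qed
  show ?thesis using o 1 2 3 by simp
qed

lemma tri_count: assumes "finite D" "alpha permutes D" "sigma permutes D"
  "\<forall>d\<in>D. alpha (alpha d) = d \<and> alpha d \<noteq> d"
  "\<forall>d\<in>D. (sigma \<circ> alpha) d \<noteq> d \<and> ((sigma \<circ> alpha) ^^ 3) d = d"
  shows "card D = 2 * card (arcs D alpha)" "card D = 3 * card (triangles D alpha sigma)"
proof -
  show "card D = 2 * card (arcs D alpha)" unfolding arcs_def
    using card_orbits_const[OF assms(2,1)] orb_inv[OF assms(2) _ assms(4)] by blast
  have p: "sigma \<circ> alpha permutes D" using assms(2,3) by (rule permutes_compose)
  show "card D = 3 * card (triangles D alpha sigma)" unfolding triangles_def
    using card_orbits_const[OF p assms(1)] orb_tri[OF p _ assms(5)] by blast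
qed

lemma parts: assumes "ideal_triangulation_sphere D alpha sigma"
  shows "finite D" "D \<noteq> {}" "alpha permutes D" "sigma permutes D"
  "\<forall>d\<in>D. alpha (alpha d) = d \<and> alpha d \<noteq> d"
  "\<forall>d\<in>D. (sigma \<circ> alpha) d \<noteq> d \<and> ((sigma \<circ> alpha) ^^ 3) d = d"
  "int (card (punctures D sigma)) - int (card (arcs D alpha))
       + int (card (triangles D alpha sigma)) = 2"
  using assms unfolding ideal_triangulation_sphere_def by (simp_all only:) argo+

lemma euler_card: assumes "ideal_triangulation_sphere D alpha sigma"
  shows "card D + 12 = 6 * card (punctures D sigma)"
proof -
  note a = parts[OF assms]
  have c: "card D = 2 * card (arcs D alpha)" "card D = 3 * card (triangles D alpha sigma)"
    using tri_count[OF a(1,3,4,5,6)] by blast+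
  show ?thesis using a(7) c by linarith
qed

lemma mk_tri: assumes "finite D" "D \<noteq> {}" "alpha permutes D" "sigma permutes D"
  "\<forall>d\<in>D. alpha (alpha d) = d \<and> alpha d \<noteq> d"
  "\<forall>d\<in>D. (sigma \<circ> alpha) d \<noteq> d \<and> ((sigma \<circ> alpha) ^^ 3) d = d"
  "\<forall>d\<in>D. \<forall>e\<in>D. (d, e) \<in> ({(x, alpha x) | x. x \<in> D} \<union> {(x, sigma x) | x. x \<in> D})\<^sup>*"
  "card D + 12 = 6 * card (punctures D sigma)"
  shows "ideal_triangulation_sphere D alpha sigma"
proof -
  have c: "card D = 2 * card (arcs D alpha)" "card D = 3 * card (triangles D alpha sigma)"
    using tri_count[OF assms(1,3,4,5,6)] by blast+
  have "int (card (punctures D sigma)) - int (card (arcs D alpha))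
       + int (card (triangles D alpha sigma)) = 2" using assms(8) c by linarith
  then show ?thesis unfolding ideal_triangulation_sphere_def using assms(1-7) by blast
qed

lemma no_T4_5: assumes "ideal_triangulation_sphere D alpha sigma" "card (punctures D sigma) = 5"
  shows "\<not> T4 D alpha sigma"
proof
  assume t: "T4 D alpha sigma"
  note a = parts[OF assms(1)]
  have "card D = (\<Sum>P\<in>punctures D sigma. card P)" unfolding punctures_def
    using card_orbits_sum[OF a(4,1)] by blast
  also have "\<dots> \<ge> card (punctures D sigma) * 4"
  proof -
    have "\<And>P. P \<in> punctures D sigma \<Longrightarrow> 4 \<le> card P"
      using t by (auto simp: punctures_def T4_def valence_def)
    then show ?thesis using sum_bounded_below[of "punctures D sigma" 4 card] by simp
  qed
  finally show False using euler_card[OF assms(1)] assms(2) by linarith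
qed

lemma no_T3h_4: assumes "ideal_triangulation_sphere D alpha sigma" "card (punctures D sigma) = 4"
  shows "\<not> T3half D alpha sigma"
proof
  assume t: "T3half D alpha sigma"
  note a = parts[OF assms(1)]
  obtain d where d: "d \<in> D" using a(2) by blast
  have ad: "alpha d \<in> D" using permutes_in_image[OF a(3)] d by simp
  obtain e where e: "e \<in> D" "card (orb sigma e) \<ge> 4"
    using t d ad unfolding T3half_def valence_def by blast
  let ?C = "punctures D sigma"
  have fC: "finite ?C" using a(1) unfolding punctures_def by simp
  have eC: "orb sigma e \<in> ?C" using e unfolding punctures_def by blast
  have "card D = (\<Sum>P\<in>?C. card P)" unfolding punctures_def
    using card_orbits_sum[OF a(4,1)] by blast
  also have "\<dots> = card (orb sigma e) + (\<Sum>P\<in>?C - {orb sigma e}. card P)"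
    using sum.remove[OF fC eC] by simp
  also have "(\<Sum>P\<in>?C - {orb sigma e}. card P) \<ge> card (?C - {orb sigma e}) * 3"
  proof -
    have "\<And>P. P \<in> ?C - {orb sigma e} \<Longrightarrow> 3 \<le> card P"
      using t by (auto simp: punctures_def T3half_def T3_def valence_def)
    then show ?thesis using sum_bounded_below[of "?C - {orb sigma e}" 3 card] by simp
  qed
  then have "card (orb sigma e) + (\<Sum>P\<in>?C - {orb sigma e}. card P) \<ge> 4 + 3 * 3"
    using e(2) eC fC assms(2) by simp
  finally show False using euler_card[OF assms(1)] assms(2) by linarith
qed




lemma perm_tab: assumes "\<forall>x. x \<notin> D \<longrightarrow> f x = x"
  "\<forall>x\<in>D. f x \<in> D \<and> g x \<in> D \<and> g (f x) = x \<and> f (g x) = x"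
  shows "f permutes D"
proof (rule bij_imp_permutes)
  show "bij_betw f D D" by (rule bij_betw_byWitness[where f'=g]) (use assms(2) in auto)
  show "\<And>x. x \<notin> D \<Longrightarrow> f x = x" using assms(1) by blast
qed

lemma card_orb_n: assumes "(f ^^ n) d = d" "0 < n" "distinct (map (\<lambda>k. (f ^^ k) d) [0..<n])"
  shows "card (orb f d) = n"
  using orb_period_list[OF assms(1,2)] distinct_card[OF assms(3)] by simp

lemma back_step: assumes "f permutes D" "finite D" "d \<in> D" "\<forall>x\<in>D. (x, f x) \<in> R"
  shows "(f d, d) \<in> R\<^sup>*"
proof -
  have perm: "permutation f" using assms(1,2) permutes_imp_permutation by blast
  obtain n where n: "n > 0" "(f ^^ n) d = d" using permutation_self[OF perm] by blast
  have "\<forall>k. (f d, (f ^^ k) (f d)) \<in> R\<^sup>*"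
  proof
    fix k show "(f d, (f ^^ k) (f d)) \<in> R\<^sup>*"
    proof (induction k)
      case 0 then show ?case by simp
    next
      case (Suc k)
      have "(f ^^ k) (f d) \<in> D" using permutes_in_funpow_image[OF assms(1)] permutes_in_image[OF assms(1)] assms(3) by simp
      then have "((f ^^ k) (f d), f ((f ^^ k) (f d))) \<in> R" using assms(4) by blast
      with Suc show ?case by simp
    qed
  qed
  moreover have "(f ^^ (n - 1)) (f d) = d"
  proof -
    have "(f ^^ (n - 1)) (f d) = (f ^^ (n - 1 + 1)) d" by (simp only: funpow_add) simp
    then show ?thesis using n by simp
  qed
  ultimately show ?thesis by metis
qed

lemma conn: fixes alpha sigma :: "'a \<Rightarrow> 'a" and D :: "'a set" and R :: "('a \<times> 'a) set"
  defines "R \<equiv> {(x, alpha x) | x. x \<in> D} \<union> {(x, sigma x) | x. x \<in> D}"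
  assumes "alpha permutes D" "sigma permutes D" "finite D" "c \<in> D" "\<forall>d\<in>D. (c, d) \<in> R\<^sup>*"
  shows "\<forall>d\<in>D. \<forall>e\<in>D. (d, e) \<in> R\<^sup>*"
proof -
  have ba: "(alpha d, d) \<in> R\<^sup>*" if "d \<in> D" for d
    by (rule back_step[OF assms(2,4) that]) (auto simp: R_def)
  have bs: "(sigma d, d) \<in> R\<^sup>*" if "d \<in> D" for d
    by (rule back_step[OF assms(3,4) that]) (auto simp: R_def)
  have sym: "y \<in> D \<and> (y, x) \<in> R\<^sup>*" if "(x, y) \<in> R\<^sup>*" "x \<in> D" for x y
    using that(1)
  proof (induction rule: rtrancl_induct)
    case base then show ?case using that(2) by simp
  next
    case (step y z)
    from step(2) have "(z = alpha y \<or> z = sigma y) \<and> y \<in> D" unfolding R_def by blast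
    then have "z \<in> D \<and> (z, y) \<in> R\<^sup>*"
      using ba bs permutes_in_image[OF assms(2)] permutes_in_image[OF assms(3)] by auto
    then show ?case using step(3) by (meson rtrancl_trans)
  qed
  show ?thesis
  proof (intro ballI)
    fix d e assume "d \<in> D" "e \<in> D"
    then have "(d, c) \<in> R\<^sup>*" "(c, e) \<in> R\<^sup>*" using sym assms(5,6) by blast+
    then show "(d, e) \<in> R\<^sup>*" by (rule rtrancl_trans)
  qed
qed

lemma fpn: "(f ^^ numeral k) x = f ((f ^^ pred_numeral k) x)"
  by (simp add: numeral_eq_Suc)

lemma ball_listI: "A = set xs \<Longrightarrow> list_all P xs \<Longrightarrow> \<forall>d\<in>A. P d"
  by (simp add: list_all_iff)

lemma rstep: "(x, y) \<in> R\<^sup>* \<Longrightarrow> (y, z) \<in> R \<Longrightarrow> (x, z) \<in> R\<^sup>*"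
  by (rule rtrancl_into_rtrancl)



definition aTet :: "nat \<Rightarrow> nat" where "aTet x = (if x < 12 then [8, 11, 3, 2, 10, 6, 5, 9, 0, 7, 4, 1] ! x else x)"

definition sTet :: "nat \<Rightarrow> nat" where "sTet x = (if x < 12 then [6, 9, 4, 0, 11, 7, 3, 10, 1, 8, 5, 2] ! x else x)"

definition siTet :: "nat \<Rightarrow> nat" where "siTet x = (if x < 12 then [3, 8, 11, 6, 2, 10, 0, 5, 9, 1, 7, 4] ! x else x)"

definition vTet :: "nat \<Rightarrow> nat" where "vTet x = [3, 3, 3, 3, 3, 3, 3, 3, 3, 3, 3, 3] ! x"

lemma DTet: "{..<12::nat} = set [0, 1, 2, 3, 4, 5, 6, 7, 8, 9, 10, 11]" by (simp add: lessThan_atLeast0 atLeastLessThan_upt upt_rec numeral_eq_Suc)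

lemma aTet_perm: "aTet permutes {..<12}"
  by (rule perm_tab[where g=aTet]) (simp add: aTet_def, simp add: aTet_def DTet)

lemma sTet_perm: "sTet permutes {..<12}"
  by (rule perm_tab[where g=siTet]) (simp add: sTet_def, simp add: sTet_def siTet_def DTet)

lemma aTet_inv: "\<forall>d\<in>{..<12::nat}. aTet (aTet d) = d \<and> aTet d \<noteq> d"
  by (simp add: aTet_def DTet)

lemma pTet: "\<forall>d\<in>{..<12::nat}. (sTet \<circ> aTet) d \<noteq> d \<and> ((sTet \<circ> aTet) ^^ 3) d = d"
  by (simp add: aTet_def sTet_def DTet fpn)

lemma vTet: "\<forall>d\<in>{..<12::nat}. (sTet ^^ vTet d) d = d \<and> 0 < vTet d \<and> distinct (map (\<lambda>k. (sTet ^^ k) d) [0..<vTet d])"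
  by (simp add: sTet_def vTet_def DTet fpn upt_rec)

lemma valTet: "\<forall>d\<in>{..<12::nat}. valence sTet d = vTet d"
proof
  fix d :: nat assume "d \<in> {..<12}"
  then have "(sTet ^^ vTet d) d = d" "0 < vTet d" "distinct (map (\<lambda>k. (sTet ^^ k) d) [0..<vTet d])"
    using vTet by blast+
  then show "valence sTet d = vTet d" unfolding valence_def by (rule card_orb_n)
qed

lemma punctTet: "card (punctures {..<12::nat} sTet) = 4"
proof -
  have "real (card (punctures {..<12::nat} sTet)) = (\<Sum>d\<in>{..<12::nat}. 1 / real (card (orb sTet d)))"
    unfolding punctures_def by (rule count_orbits[OF sTet_perm]) simp
  also have "\<dots> = (\<Sum>d\<in>{..<12::nat}. 1 / real (vTet d))"
    by (rule sum.cong) (use valTet in \<open>auto simp: valence_def\<close>)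
  also have "\<dots> = 4" by (simp add: vTet_def DTet)
  finally show ?thesis by linarith
qed

lemma reachTet: "\<forall>d\<in>{..<12::nat}. (0, d) \<in> ({(x, aTet x) | x. x \<in> {..<12::nat}} \<union> {(x, sTet x) | x. x \<in> {..<12}})\<^sup>*"
proof -
  have h0: "(0::nat, 0) \<in> ({(x, aTet x) | x. x \<in> {..<12::nat}} \<union> {(x, sTet x) | x. x \<in> {..<12}})\<^sup>*" by simp
  have h8: "(0::nat, 8) \<in> ({(x, aTet x) | x. x \<in> {..<12::nat}} \<union> {(x, sTet x) | x. x \<in> {..<12}})\<^sup>*" by (rule rstep[OF h0]) (auto simp: aTet_def)
  have h6: "(0::nat, 6) \<in> ({(x, aTet x) | x. x \<in> {..<12::nat}} \<union> {(x, sTet x) | x. x \<in> {..<12}})\<^sup>*" by (rule rstep[OF h0]) (auto simp: sTet_def)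
  have h1: "(0::nat, 1) \<in> ({(x, aTet x) | x. x \<in> {..<12::nat}} \<union> {(x, sTet x) | x. x \<in> {..<12}})\<^sup>*" by (rule rstep[OF h8]) (auto simp: sTet_def)
  have h5: "(0::nat, 5) \<in> ({(x, aTet x) | x. x \<in> {..<12::nat}} \<union> {(x, sTet x) | x. x \<in> {..<12}})\<^sup>*" by (rule rstep[OF h6]) (auto simp: aTet_def)
  have h3: "(0::nat, 3) \<in> ({(x, aTet x) | x. x \<in> {..<12::nat}} \<union> {(x, sTet x) | x. x \<in> {..<12}})\<^sup>*" by (rule rstep[OF h6]) (auto simp: sTet_def)
  have h11: "(0::nat, 11) \<in> ({(x, aTet x) | x. x \<in> {..<12::nat}} \<union> {(x, sTet x) | x. x \<in> {..<12}})\<^sup>*" by (rule rstep[OF h1]) (auto simp: aTet_def)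
  have h9: "(0::nat, 9) \<in> ({(x, aTet x) | x. x \<in> {..<12::nat}} \<union> {(x, sTet x) | x. x \<in> {..<12}})\<^sup>*" by (rule rstep[OF h1]) (auto simp: sTet_def)
  have h7: "(0::nat, 7) \<in> ({(x, aTet x) | x. x \<in> {..<12::nat}} \<union> {(x, sTet x) | x. x \<in> {..<12}})\<^sup>*" by (rule rstep[OF h5]) (auto simp: sTet_def)
  have h2: "(0::nat, 2) \<in> ({(x, aTet x) | x. x \<in> {..<12::nat}} \<union> {(x, sTet x) | x. x \<in> {..<12}})\<^sup>*" by (rule rstep[OF h3]) (auto simp: aTet_def)
  have h10: "(0::nat, 10) \<in> ({(x, aTet x) | x. x \<in> {..<12::nat}} \<union> {(x, sTet x) | x. x \<in> {..<12}})\<^sup>*" by (rule rstep[OF h7]) (auto simp: sTet_def)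
  have h4: "(0::nat, 4) \<in> ({(x, aTet x) | x. x \<in> {..<12::nat}} \<union> {(x, sTet x) | x. x \<in> {..<12}})\<^sup>*" by (rule rstep[OF h2]) (auto simp: sTet_def)
  show ?thesis by (rule ball_listI[OF DTet]) (simp only: list.pred_inject, intro conjI TrueI h0 h1 h2 h3 h4 h5 h6 h7 h8 h9 h10 h11)
qed

lemma triTet: "ideal_triangulation_sphere {..<12::nat} aTet sTet"
proof (rule mk_tri[OF _ _ aTet_perm sTet_perm aTet_inv pTet])
  show "\<forall>d\<in>{..<12::nat}. \<forall>e\<in>{..<12}. (d, e) \<in> ({(x, aTet x) | x. x \<in> {..<12}} \<union> {(x, sTet x) | x. x \<in> {..<12}})\<^sup>*"
    by (rule conn[OF aTet_perm sTet_perm _ _ reachTet]) simp_all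
  show "card {..<12::nat} + 12 = 6 * card (punctures {..<12} sTet)" using punctTet by simp
qed (simp, simp add: lessThan_empty_iff)

lemma condTet: "T3 {..<12::nat} aTet sTet"
  unfolding T3_def T3_def using valTet aTet_perm permutes_in_image[OF aTet_perm]
  by (simp add: vTet_def aTet_def DTet)

definition aBip :: "nat \<Rightarrow> nat" where "aBip x = (if x < 18 then [8, 10, 3, 2, 13, 6, 5, 16, 0, 14, 1, 15, 17, 4, 9, 11, 7, 12] ! x else x)"

definition sBip :: "nat \<Rightarrow> nat" where "sBip x = (if x < 18 then [6, 11, 4, 0, 14, 7, 3, 17, 1, 12, 2, 16, 15, 5, 10, 9, 8, 13] ! x else x)"

definition siBip :: "nat \<Rightarrow> nat" where "siBip x = (if x < 18 then [3, 8, 10, 6, 2, 13, 0, 5, 16, 15, 14, 1, 9, 17, 4, 12, 11, 7] ! x else x)"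

definition vBip :: "nat \<Rightarrow> nat" where "vBip x = [3, 4, 4, 3, 4, 4, 3, 4, 4, 3, 4, 4, 3, 4, 4, 3, 4, 4] ! x"

lemma DBip: "{..<18::nat} = set [0, 1, 2, 3, 4, 5, 6, 7, 8, 9, 10, 11, 12, 13, 14, 15, 16, 17]" by (simp add: lessThan_atLeast0 atLeastLessThan_upt upt_rec numeral_eq_Suc)

lemma aBip_perm: "aBip permutes {..<18}"
  by (rule perm_tab[where g=aBip]) (simp add: aBip_def, simp add: aBip_def DBip)

lemma sBip_perm: "sBip permutes {..<18}"
  by (rule perm_tab[where g=siBip]) (simp add: sBip_def, simp add: sBip_def siBip_def DBip)

lemma aBip_inv: "\<forall>d\<in>{..<18::nat}. aBip (aBip d) = d \<and> aBip d \<noteq> d"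
  by (simp add: aBip_def DBip)

lemma pBip: "\<forall>d\<in>{..<18::nat}. (sBip \<circ> aBip) d \<noteq> d \<and> ((sBip \<circ> aBip) ^^ 3) d = d"
  by (simp add: aBip_def sBip_def DBip fpn)

lemma vBip: "\<forall>d\<in>{..<18::nat}. (sBip ^^ vBip d) d = d \<and> 0 < vBip d \<and> distinct (map (\<lambda>k. (sBip ^^ k) d) [0..<vBip d])"
  by (simp add: sBip_def vBip_def DBip fpn upt_rec)

lemma valBip: "\<forall>d\<in>{..<18::nat}. valence sBip d = vBip d"
proof
  fix d :: nat assume "d \<in> {..<18}"
  then have "(sBip ^^ vBip d) d = d" "0 < vBip d" "distinct (map (\<lambda>k. (sBip ^^ k) d) [0..<vBip d])"
    using vBip by blast+
  then show "valence sBip d = vBip d" unfolding valence_def by (rule card_orb_n)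
qed

lemma punctBip: "card (punctures {..<18::nat} sBip) = 5"
proof -
  have "real (card (punctures {..<18::nat} sBip)) = (\<Sum>d\<in>{..<18::nat}. 1 / real (card (orb sBip d)))"
    unfolding punctures_def by (rule count_orbits[OF sBip_perm]) simp
  also have "\<dots> = (\<Sum>d\<in>{..<18::nat}. 1 / real (vBip d))"
    by (rule sum.cong) (use valBip in \<open>auto simp: valence_def\<close>)
  also have "\<dots> = 5" by (simp add: vBip_def DBip)
  finally show ?thesis by linarith
qed

lemma reachBip: "\<forall>d\<in>{..<18::nat}. (0, d) \<in> ({(x, aBip x) | x. x \<in> {..<18::nat}} \<union> {(x, sBip x) | x. x \<in> {..<18}})\<^sup>*"
proof -
  have h0: "(0::nat, 0) \<in> ({(x, aBip x) | x. x \<in> {..<18::nat}} \<union> {(x, sBip x) | x. x \<in> {..<18}})\<^sup>*" by simp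
  have h8: "(0::nat, 8) \<in> ({(x, aBip x) | x. x \<in> {..<18::nat}} \<union> {(x, sBip x) | x. x \<in> {..<18}})\<^sup>*" by (rule rstep[OF h0]) (auto simp: aBip_def)
  have h6: "(0::nat, 6) \<in> ({(x, aBip x) | x. x \<in> {..<18::nat}} \<union> {(x, sBip x) | x. x \<in> {..<18}})\<^sup>*" by (rule rstep[OF h0]) (auto simp: sBip_def)
  have h1: "(0::nat, 1) \<in> ({(x, aBip x) | x. x \<in> {..<18::nat}} \<union> {(x, sBip x) | x. x \<in> {..<18}})\<^sup>*" by (rule rstep[OF h8]) (auto simp: sBip_def)
  have h5: "(0::nat, 5) \<in> ({(x, aBip x) | x. x \<in> {..<18::nat}} \<union> {(x, sBip x) | x. x \<in> {..<18}})\<^sup>*" by (rule rstep[OF h6]) (auto simp: aBip_def)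
  have h3: "(0::nat, 3) \<in> ({(x, aBip x) | x. x \<in> {..<18::nat}} \<union> {(x, sBip x) | x. x \<in> {..<18}})\<^sup>*" by (rule rstep[OF h6]) (auto simp: sBip_def)
  have h10: "(0::nat, 10) \<in> ({(x, aBip x) | x. x \<in> {..<18::nat}} \<union> {(x, sBip x) | x. x \<in> {..<18}})\<^sup>*" by (rule rstep[OF h1]) (auto simp: aBip_def)
  have h11: "(0::nat, 11) \<in> ({(x, aBip x) | x. x \<in> {..<18::nat}} \<union> {(x, sBip x) | x. x \<in> {..<18}})\<^sup>*" by (rule rstep[OF h1]) (auto simp: sBip_def)
  have h7: "(0::nat, 7) \<in> ({(x, aBip x) | x. x \<in> {..<18::nat}} \<union> {(x, sBip x) | x. x \<in> {..<18}})\<^sup>*" by (rule rstep[OF h5]) (auto simp: sBip_def)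
  have h2: "(0::nat, 2) \<in> ({(x, aBip x) | x. x \<in> {..<18::nat}} \<union> {(x, sBip x) | x. x \<in> {..<18}})\<^sup>*" by (rule rstep[OF h3]) (auto simp: aBip_def)
  have h15: "(0::nat, 15) \<in> ({(x, aBip x) | x. x \<in> {..<18::nat}} \<union> {(x, sBip x) | x. x \<in> {..<18}})\<^sup>*" by (rule rstep[OF h11]) (auto simp: aBip_def)
  have h16: "(0::nat, 16) \<in> ({(x, aBip x) | x. x \<in> {..<18::nat}} \<union> {(x, sBip x) | x. x \<in> {..<18}})\<^sup>*" by (rule rstep[OF h11]) (auto simp: sBip_def)
  have h17: "(0::nat, 17) \<in> ({(x, aBip x) | x. x \<in> {..<18::nat}} \<union> {(x, sBip x) | x. x \<in> {..<18}})\<^sup>*" by (rule rstep[OF h7]) (auto simp: sBip_def)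
  have h4: "(0::nat, 4) \<in> ({(x, aBip x) | x. x \<in> {..<18::nat}} \<union> {(x, sBip x) | x. x \<in> {..<18}})\<^sup>*" by (rule rstep[OF h2]) (auto simp: sBip_def)
  have h9: "(0::nat, 9) \<in> ({(x, aBip x) | x. x \<in> {..<18::nat}} \<union> {(x, sBip x) | x. x \<in> {..<18}})\<^sup>*" by (rule rstep[OF h15]) (auto simp: sBip_def)
  have h12: "(0::nat, 12) \<in> ({(x, aBip x) | x. x \<in> {..<18::nat}} \<union> {(x, sBip x) | x. x \<in> {..<18}})\<^sup>*" by (rule rstep[OF h17]) (auto simp: aBip_def)
  have h13: "(0::nat, 13) \<in> ({(x, aBip x) | x. x \<in> {..<18::nat}} \<union> {(x, sBip x) | x. x \<in> {..<18}})\<^sup>*" by (rule rstep[OF h17]) (auto simp: sBip_def)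
  have h14: "(0::nat, 14) \<in> ({(x, aBip x) | x. x \<in> {..<18::nat}} \<union> {(x, sBip x) | x. x \<in> {..<18}})\<^sup>*" by (rule rstep[OF h4]) (auto simp: sBip_def)
  show ?thesis by (rule ball_listI[OF DBip]) (simp only: list.pred_inject, intro conjI TrueI h0 h1 h2 h3 h4 h5 h6 h7 h8 h9 h10 h11 h12 h13 h14 h15 h16 h17)
qed

lemma triBip: "ideal_triangulation_sphere {..<18::nat} aBip sBip"
proof (rule mk_tri[OF _ _ aBip_perm sBip_perm aBip_inv pBip])
  show "\<forall>d\<in>{..<18::nat}. \<forall>e\<in>{..<18}. (d, e) \<in> ({(x, aBip x) | x. x \<in> {..<18}} \<union> {(x, sBip x) | x. x \<in> {..<18}})\<^sup>*"
    by (rule conn[OF aBip_perm sBip_perm _ _ reachBip]) simp_all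
  show "card {..<18::nat} + 12 = 6 * card (punctures {..<18} sBip)" using punctBip by simp
qed (simp, simp add: lessThan_empty_iff)

lemma condBip: "T3half {..<18::nat} aBip sBip"
  unfolding T3half_def T3_def using valBip aBip_perm permutes_in_image[OF aBip_perm]
  by (simp add: vBip_def aBip_def DBip)

definition aOct :: "nat \<Rightarrow> nat" where "aOct x = (if x < 24 then [11, 13, 3, 2, 16, 6, 5, 19, 9, 8, 22, 0, 17, 1, 21, 20, 4, 12, 23, 7, 15, 14, 10, 18] ! x else x)"

definition sOct :: "nat \<Rightarrow> nat" where "sOct x = (if x < 24 then [9, 14, 4, 0, 17, 7, 3, 20, 10, 6, 23, 1, 15, 2, 22, 18, 5, 13, 21, 8, 16, 12, 11, 19] ! x else x)"

definition siOct :: "nat \<Rightarrow> nat" where "siOct x = (if x < 24 then [3, 11, 13, 6, 2, 16, 9, 5, 19, 0, 8, 22, 21, 17, 1, 12, 20, 4, 15, 23, 7, 18, 14, 10] ! x else x)"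

definition vOct :: "nat \<Rightarrow> nat" where "vOct x = [4, 4, 4, 4, 4, 4, 4, 4, 4, 4, 4, 4, 4, 4, 4, 4, 4, 4, 4, 4, 4, 4, 4, 4] ! x"

lemma DOct: "{..<24::nat} = set [0, 1, 2, 3, 4, 5, 6, 7, 8, 9, 10, 11, 12, 13, 14, 15, 16, 17, 18, 19, 20, 21, 22, 23]" by (simp add: lessThan_atLeast0 atLeastLessThan_upt upt_rec numeral_eq_Suc)

lemma aOct_perm: "aOct permutes {..<24}"
  by (rule perm_tab[where g=aOct]) (simp add: aOct_def, simp add: aOct_def DOct)

lemma sOct_perm: "sOct permutes {..<24}"
  by (rule perm_tab[where g=siOct]) (simp add: sOct_def, simp add: sOct_def siOct_def DOct)

lemma aOct_inv: "\<forall>d\<in>{..<24::nat}. aOct (aOct d) = d \<and> aOct d \<noteq> d"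
  by (simp add: aOct_def DOct)

lemma pOct: "\<forall>d\<in>{..<24::nat}. (sOct \<circ> aOct) d \<noteq> d \<and> ((sOct \<circ> aOct) ^^ 3) d = d"
  by (simp add: aOct_def sOct_def DOct fpn)

lemma vOct: "\<forall>d\<in>{..<24::nat}. (sOct ^^ vOct d) d = d \<and> 0 < vOct d \<and> distinct (map (\<lambda>k. (sOct ^^ k) d) [0..<vOct d])"
  by (simp add: sOct_def vOct_def DOct fpn upt_rec)

lemma valOct: "\<forall>d\<in>{..<24::nat}. valence sOct d = vOct d"
proof
  fix d :: nat assume "d \<in> {..<24}"
  then have "(sOct ^^ vOct d) d = d" "0 < vOct d" "distinct (map (\<lambda>k. (sOct ^^ k) d) [0..<vOct d])"
    using vOct by blast+
  then show "valence sOct d = vOct d" unfolding valence_def by (rule card_orb_n)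
qed

lemma punctOct: "card (punctures {..<24::nat} sOct) = 6"
proof -
  have "real (card (punctures {..<24::nat} sOct)) = (\<Sum>d\<in>{..<24::nat}. 1 / real (card (orb sOct d)))"
    unfolding punctures_def by (rule count_orbits[OF sOct_perm]) simp
  also have "\<dots> = (\<Sum>d\<in>{..<24::nat}. 1 / real (vOct d))"
    by (rule sum.cong) (use valOct in \<open>auto simp: valence_def\<close>)
  also have "\<dots> = 6" by (simp add: vOct_def DOct)
  finally show ?thesis by linarith
qed

lemma reachOct: "\<forall>d\<in>{..<24::nat}. (0, d) \<in> ({(x, aOct x) | x. x \<in> {..<24::nat}} \<union> {(x, sOct x) | x. x \<in> {..<24}})\<^sup>*"
proof -
  have h0: "(0::nat, 0) \<in> ({(x, aOct x) | x. x \<in> {..<24::nat}} \<union> {(x, sOct x) | x. x \<in> {..<24}})\<^sup>*" by simp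
  have h11: "(0::nat, 11) \<in> ({(x, aOct x) | x. x \<in> {..<24::nat}} \<union> {(x, sOct x) | x. x \<in> {..<24}})\<^sup>*" by (rule rstep[OF h0]) (auto simp: aOct_def)
  have h9: "(0::nat, 9) \<in> ({(x, aOct x) | x. x \<in> {..<24::nat}} \<union> {(x, sOct x) | x. x \<in> {..<24}})\<^sup>*" by (rule rstep[OF h0]) (auto simp: sOct_def)
  have h1: "(0::nat, 1) \<in> ({(x, aOct x) | x. x \<in> {..<24::nat}} \<union> {(x, sOct x) | x. x \<in> {..<24}})\<^sup>*" by (rule rstep[OF h11]) (auto simp: sOct_def)
  have h8: "(0::nat, 8) \<in> ({(x, aOct x) | x. x \<in> {..<24::nat}} \<union> {(x, sOct x) | x. x \<in> {..<24}})\<^sup>*" by (rule rstep[OF h9]) (auto simp: aOct_def)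
  have h6: "(0::nat, 6) \<in> ({(x, aOct x) | x. x \<in> {..<24::nat}} \<union> {(x, sOct x) | x. x \<in> {..<24}})\<^sup>*" by (rule rstep[OF h9]) (auto simp: sOct_def)
  have h13: "(0::nat, 13) \<in> ({(x, aOct x) | x. x \<in> {..<24::nat}} \<union> {(x, sOct x) | x. x \<in> {..<24}})\<^sup>*" by (rule rstep[OF h1]) (auto simp: aOct_def)
  have h14: "(0::nat, 14) \<in> ({(x, aOct x) | x. x \<in> {..<24::nat}} \<union> {(x, sOct x) | x. x \<in> {..<24}})\<^sup>*" by (rule rstep[OF h1]) (auto simp: sOct_def)
  have h10: "(0::nat, 10) \<in> ({(x, aOct x) | x. x \<in> {..<24::nat}} \<union> {(x, sOct x) | x. x \<in> {..<24}})\<^sup>*" by (rule rstep[OF h8]) (auto simp: sOct_def)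
  have h5: "(0::nat, 5) \<in> ({(x, aOct x) | x. x \<in> {..<24::nat}} \<union> {(x, sOct x) | x. x \<in> {..<24}})\<^sup>*" by (rule rstep[OF h6]) (auto simp: aOct_def)
  have h3: "(0::nat, 3) \<in> ({(x, aOct x) | x. x \<in> {..<24::nat}} \<union> {(x, sOct x) | x. x \<in> {..<24}})\<^sup>*" by (rule rstep[OF h6]) (auto simp: sOct_def)
  have h2: "(0::nat, 2) \<in> ({(x, aOct x) | x. x \<in> {..<24::nat}} \<union> {(x, sOct x) | x. x \<in> {..<24}})\<^sup>*" by (rule rstep[OF h13]) (auto simp: sOct_def)
  have h21: "(0::nat, 21) \<in> ({(x, aOct x) | x. x \<in> {..<24::nat}} \<union> {(x, sOct x) | x. x \<in> {..<24}})\<^sup>*" by (rule rstep[OF h14]) (auto simp: aOct_def)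
  have h22: "(0::nat, 22) \<in> ({(x, aOct x) | x. x \<in> {..<24::nat}} \<union> {(x, sOct x) | x. x \<in> {..<24}})\<^sup>*" by (rule rstep[OF h14]) (auto simp: sOct_def)
  have h23: "(0::nat, 23) \<in> ({(x, aOct x) | x. x \<in> {..<24::nat}} \<union> {(x, sOct x) | x. x \<in> {..<24}})\<^sup>*" by (rule rstep[OF h10]) (auto simp: sOct_def)
  have h7: "(0::nat, 7) \<in> ({(x, aOct x) | x. x \<in> {..<24::nat}} \<union> {(x, sOct x) | x. x \<in> {..<24}})\<^sup>*" by (rule rstep[OF h5]) (auto simp: sOct_def)
  have h4: "(0::nat, 4) \<in> ({(x, aOct x) | x. x \<in> {..<24::nat}} \<union> {(x, sOct x) | x. x \<in> {..<24}})\<^sup>*" by (rule rstep[OF h2]) (auto simp: sOct_def)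
  have h12: "(0::nat, 12) \<in> ({(x, aOct x) | x. x \<in> {..<24::nat}} \<union> {(x, sOct x) | x. x \<in> {..<24}})\<^sup>*" by (rule rstep[OF h21]) (auto simp: sOct_def)
  have h18: "(0::nat, 18) \<in> ({(x, aOct x) | x. x \<in> {..<24::nat}} \<union> {(x, sOct x) | x. x \<in> {..<24}})\<^sup>*" by (rule rstep[OF h23]) (auto simp: aOct_def)
  have h19: "(0::nat, 19) \<in> ({(x, aOct x) | x. x \<in> {..<24::nat}} \<union> {(x, sOct x) | x. x \<in> {..<24}})\<^sup>*" by (rule rstep[OF h23]) (auto simp: sOct_def)
  have h20: "(0::nat, 20) \<in> ({(x, aOct x) | x. x \<in> {..<24::nat}} \<union> {(x, sOct x) | x. x \<in> {..<24}})\<^sup>*" by (rule rstep[OF h7]) (auto simp: sOct_def)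
  have h16: "(0::nat, 16) \<in> ({(x, aOct x) | x. x \<in> {..<24::nat}} \<union> {(x, sOct x) | x. x \<in> {..<24}})\<^sup>*" by (rule rstep[OF h4]) (auto simp: aOct_def)
  have h17: "(0::nat, 17) \<in> ({(x, aOct x) | x. x \<in> {..<24::nat}} \<union> {(x, sOct x) | x. x \<in> {..<24}})\<^sup>*" by (rule rstep[OF h4]) (auto simp: sOct_def)
  have h15: "(0::nat, 15) \<in> ({(x, aOct x) | x. x \<in> {..<24::nat}} \<union> {(x, sOct x) | x. x \<in> {..<24}})\<^sup>*" by (rule rstep[OF h12]) (auto simp: sOct_def)
  show ?thesis by (rule ball_listI[OF DOct]) (simp only: list.pred_inject, intro conjI TrueI h0 h1 h2 h3 h4 h5 h6 h7 h8 h9 h10 h11 h12 h13 h14 h15 h16 h17 h18 h19 h20 h21 h22 h23)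
qed

lemma triOct: "ideal_triangulation_sphere {..<24::nat} aOct sOct"
proof (rule mk_tri[OF _ _ aOct_perm sOct_perm aOct_inv pOct])
  show "\<forall>d\<in>{..<24::nat}. \<forall>e\<in>{..<24}. (d, e) \<in> ({(x, aOct x) | x. x \<in> {..<24}} \<union> {(x, sOct x) | x. x \<in> {..<24}})\<^sup>*"
    by (rule conn[OF aOct_perm sOct_perm _ _ reachOct]) simp_all
  show "card {..<24::nat} + 12 = 6 * card (punctures {..<24} sOct)" using punctOct by simp
qed (simp, simp add: lessThan_empty_iff)

lemma condOct: "T4 {..<24::nat} aOct sOct"
  unfolding T4_def T3_def using valOct aOct_perm permutes_in_image[OF aOct_perm]
  by (simp add: vOct_def aOct_def DOct)


theorem lemma5p4:
  shows "(\<exists>(D::nat set) alpha sigma. ideal_triangulation_sphere D alpha sigma \<and>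
            card (punctures D sigma) = 6 \<and> T4 D alpha sigma)
       \<and> (\<exists>(D::nat set) alpha sigma. ideal_triangulation_sphere D alpha sigma \<and>
            card (punctures D sigma) = 5 \<and> T3half D alpha sigma)
       \<and> (\<forall>(D::'a set) alpha sigma. ideal_triangulation_sphere D alpha sigma \<and>
            card (punctures D sigma) = 5 \<longrightarrow> \<not> T4 D alpha sigma)
       \<and> (\<exists>(D::nat set) alpha sigma. ideal_triangulation_sphere D alpha sigma \<and>
            card (punctures D sigma) = 4 \<and> T3 D alpha sigma)
       \<and> (\<forall>(D::'a set) alpha sigma. ideal_triangulation_sphere D alpha sigma \<and>
            card (punctures D sigma) = 4 \<longrightarrow> \<not> T3half D alpha sigma)"
proof (intro conjI)
  show "\<exists>(D::nat set) alpha sigma. ideal_triangulation_sphere D alpha sigma \<and>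
            card (punctures D sigma) = 6 \<and> T4 D alpha sigma"
    using triOct punctOct condOct by blast
  show "\<exists>(D::nat set) alpha sigma. ideal_triangulation_sphere D alpha sigma \<and>
            card (punctures D sigma) = 5 \<and> T3half D alpha sigma"
    using triBip punctBip condBip by blast
  show "\<exists>(D::nat set) alpha sigma. ideal_triangulation_sphere D alpha sigma \<and>
            card (punctures D sigma) = 4 \<and> T3 D alpha sigma"
    using triTet punctTet condTet by blast
  show "\<forall>(D::'a set) alpha sigma. ideal_triangulation_sphere D alpha sigma \<and>
            card (punctures D sigma) = 5 \<longrightarrow> \<not> T4 D alpha sigma"
    using no_T4_5 by blast
  show "\<forall>(D::'a set) alpha sigma. ideal_triangulation_sphere D alpha sigma \<and>
            card (punctures D sigma) = 4 \<longrightarrow> \<not> T3half D alpha sigma"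
    using no_T3h_4 by blast
qed

end
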